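(* Let $\mathcal{C}=\{C_1,\dots,C_m\}$ be a family of chargers and $\mathcal{R}=\{R_1,\dots,R_n\}$ a nonempty family ($n\ge 1$) of receivers, placed in the plane so that the placement constraints hold. If $\mathbf{x}^*\in[0,1]^m$ is an optimal solution to MAX-POWER, i.e. $\mathbf{x}^*\in\arg\max_{\mathbf{x}\in[0,1]^m} P(\mathcal{C}(\mathbf{x}),\mathcal{R})$, then $\mathbf{x}^*\in\{0,1\}^m$. In particular, there exists an optimal solution to MAX-POWER in which every charger operates either at full capacity ($\mathbf{x}_j=1$) or not at all ($\mathbf{x}_j=0$).
   Context: Fixed constants $\lambda>0$ (wavelength), $\beta>0$, $\gamma>0$. For a charger $C$ and receiver $R$ at Euclidean distance $d=\mathrm{dist}(C,R)$, the electric field vector is $\mathbf{E}(C,R)=\beta\cdot\frac{1}{d}\cdot\big(\cos(\tfrac{2\pi}{\lambda}d),\ \sin(\tfrac{2\pi}{\lambda}d)\big)^T\in\mathbb{R}^2$. A configuration is a vector $\mathbf{x}\in[0,1]^m$, $\mathbf{x}_j$ being the operation level of charger $C_j$. The power received by $R$ under configuration $\mathbf{x}$ is $P(\mathcal{C}(\mathbf{x}),R)=\gamma\,\big\|\sum_{j=1}^m \mathbf{x}_j\,\mathbf{E}(C_j,R)\big\|^2$ (Euclidean norm), and for a set $A$ of receivers $P(\mathcal{C}(\mathbf{x}),A)=\sum_{R\in A}P(\mathcal{C}(\mathbf{x}),R)$. Placement constraints: $\mathrm{dist}(C,R)\ge\lambda$ for every charger $C$ and receiver $R$, and $\mathrm{dist}(R,R')\ge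 \frac{\lambda}{2\pi}$ for every pair of distinct receivers $R,R'$. MAX-POWER: find $\mathbf{x}^*\in\arg\max_{\mathbf{x}\in[0,1]^m}P(\mathcal{C}(\mathbf{x}),\mathcal{R})$. *)

theory Defs
  imports "HOL-Analysis.Analysis"
begin

text \<open>Points of the plane are elements of real^2. Chargers C_1..C_m and receivers
  R_1..R_n are indexed families (indices 0..<m and 0..<n).\<close>

definition efield :: "real \<Rightarrow> real \<Rightarrow> real^2 \<Rightarrow> real^2 \<Rightarrow> real^2" where
  "efield lam beta C R =
     (let d = dist C R in
      (beta * (1 / d)) *\<^sub>R vector [cos (2 * pi / lam * d), sin (2 * pi / lam * d)])"

definition power_at :: "real \<Rightarrow> real \<Rightarrow> real \<Rightarrow> nat \<Rightarrow> (nat \<Rightarrow> real^2) \<Rightarrow> (nat \<Rightarrow> real) \<Rightarrow> real^2 \<Rightarrow> real" where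
  "power_at lam beta gamma m C x R =
     gamma * (norm (\<Sum>j<m. x j *\<^sub>R efield lam beta (C j) R))\<^sup>2"

definition total_power :: "real \<Rightarrow> real \<Rightarrow> real \<Rightarrow> nat \<Rightarrow> (nat \<Rightarrow> real^2) \<Rightarrow> nat \<Rightarrow> (nat \<Rightarrow> real^2) \<Rightarrow> (nat \<Rightarrow> real) \<Rightarrow> real" where
  "total_power lam beta gamma m C n R x = (\<Sum>i<n. power_at lam beta gamma m C x (R i))"

definition is_config :: "nat \<Rightarrow> (nat \<Rightarrow> real) \<Rightarrow> bool" where
  "is_config m x \<longleftrightarrow> (\<forall>j<m. x j \<in> {0..1})"

definition is_binary :: "nat \<Rightarrow> (nat \<Rightarrow> real) \<Rightarrow> bool" where
  "is_binary m x \<longleftrightarrow> (\<forall>j<m. x j = 0 \<or> x j = 1)"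

definition max_power_opt :: "real \<Rightarrow> real \<Rightarrow> real \<Rightarrow> nat \<Rightarrow> (nat \<Rightarrow> real^2) \<Rightarrow> nat \<Rightarrow> (nat \<Rightarrow> real^2) \<Rightarrow> (nat \<Rightarrow> real) \<Rightarrow> bool" where
  "max_power_opt lam beta gamma m C n R x \<longleftrightarrow>
     is_config m x \<and>
     (\<forall>y. is_config m y \<longrightarrow> total_power lam beta gamma m C n R y \<le> total_power lam beta gamma m C n R x)"

end

theory Submission
  imports Defs
begin

abbreviation "TP lam beta gamma m C n R \<equiv> total_power lam beta gamma m C n R"

lemma norm_identity:
  fixes u v :: "'a::real_inner"
  shows "(1-s)*(norm u)^2 + s*(norm (u+v))^2 - (norm (u + s *\<^sub>R v))^2 = s*(1-s)*(norm v)^2"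
  unfolding power2_norm_eq_inner by (simp add: inner_add_left inner_add_right inner_commute algebra_simps)

lemma sum_split:
  fixes e :: "nat \<Rightarrow> 'a::real_vector"
  assumes "j < m"
  shows "(\<Sum>k<m. x k *\<^sub>R e k) = (\<Sum>k<m. (x(j:=0)) k *\<^sub>R e k) + x j *\<^sub>R e j"
proof -
  have "(\<Sum>k<m. x k *\<^sub>R e k) = x j *\<^sub>R e j + (\<Sum>k\<in>{..<m}-{j}. x k *\<^sub>R e k)"
    using assms by (subst sum.remove[of _ j]) auto
  moreover have "(\<Sum>k<m. (x(j:=0)) k *\<^sub>R e k) = 0 + (\<Sum>k\<in>{..<m}-{j}. (x(j:=0)) k *\<^sub>R e k)"
    using assms by (subst sum.remove[of _ j]) auto
  moreover have "(\<Sum>k\<in>{..<m}-{j}. (x(j:=0)) k *\<^sub>R e k) = (\<Sum>k\<in>{..<m}-{j}. x k *\<^sub>R e k)"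
    by (rule sum.cong) auto
  ultimately show ?thesis by simp
qed

lemma key:
  assumes "j < m"
  shows "(1-s)*TP lam beta gamma m C n R (x(j:=0)) + s*TP lam beta gamma m C n R (x(j:=1))
          - TP lam beta gamma m C n R (x(j:=s))
        = s*(1-s)*gamma*(\<Sum>i<n. (norm (efield lam beta (C j) (R i)))^2)"
proof -
  define u where "u i = (\<Sum>k<m. (x(j:=0)) k *\<^sub>R efield lam beta (C k) (R i))" for i
  define v where "v i = efield lam beta (C j) (R i)" for i
  have P: "power_at lam beta gamma m C (x(j:=t)) (R i) = gamma * (norm (u i + t *\<^sub>R v i))^2" for t i
  proof -
    have "(\<Sum>k<m. (x(j:=t)) k *\<^sub>R efield lam beta (C k) (R i))
        = (\<Sum>k<m. ((x(j:=t))(j:=0)) k *\<^sub>R efield lam beta (C k) (R i)) + t *\<^sub>R v i"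
      using sum_split[OF assms, of "x(j:=t)"] v_def by simp
    then show ?thesis unfolding power_at_def u_def by simp
  qed
  have "(1-s)*TP lam beta gamma m C n R (x(j:=0)) + s*TP lam beta gamma m C n R (x(j:=1))
          - TP lam beta gamma m C n R (x(j:=s))
      = (\<Sum>i<n. gamma * ((1-s)*(norm (u i))^2 + s*(norm (u i + v i))^2 - (norm (u i + s *\<^sub>R v i))^2))"
    unfolding total_power_def P by (simp add: sum_distrib_left sum_subtractf sum.distrib algebra_simps)
  also have "\<dots> = (\<Sum>i<n. gamma * (s*(1-s)*(norm (v i))^2))"
    by (simp add: norm_identity)
  also have "\<dots> = s*(1-s)*gamma*(\<Sum>i<n. (norm (efield lam beta (C j) (R i)))^2)"
    by (simp add: v_def sum_distrib_left algebra_simps)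
  finally show ?thesis .
qed

lemma TP_cong:
  assumes "\<And>j. j < m \<Longrightarrow> x j = y j"
  shows "TP lam beta gamma m C n R x = TP lam beta gamma m C n R y"
  unfolding total_power_def power_at_def using assms by (auto intro!: sum.cong)

lemma efield_norm:
  assumes "dist C R > 0" "beta > 0"
  shows "norm (efield lam beta C R) > 0"
proof -
  have "vector [cos a, sin a] \<noteq> (0::real^2)" for a
  proof
    assume h: "vector [cos a, sin a] = (0::real^2)"
    have "cos a = 0" using arg_cong[OF h, of "\<lambda>v. v $ 1"] by simp
    moreover have "sin a = 0" using arg_cong[OF h, of "\<lambda>v. v $ 2"] by simp
    ultimately show False using sin_cos_squared_add[of a] by simp
  qed
  then show ?thesis using assms unfolding efield_def Let_def by simp
qed

lemma round:
  assumes "is_config m y" "gamma \<ge> 0"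
  shows "\<exists>b. is_config m b \<and> (\<forall>j. j < k \<and> j < m \<longrightarrow> b j = 0 \<or> b j = 1)
            \<and> TP lam beta gamma m C n R y \<le> TP lam beta gamma m C n R b"
proof (induction k)
  case 0
  then show ?case using assms by auto
next
  case (Suc k)
  then obtain b where b: "is_config m b" "\<forall>j. j < k \<and> j < m \<longrightarrow> b j = 0 \<or> b j = 1"
    "TP lam beta gamma m C n R y \<le> TP lam beta gamma m C n R b" by blast
  show ?case
  proof (cases "k < m")
    case False
    then show ?thesis using b by (intro exI[of _ b]) auto
  next
    case True
    let ?f = "TP lam beta gamma m C n R"
    let ?A = "(\<Sum>i<n. (norm (efield lam beta (C k) (R i)))^2)"
    have s: "0 \<le> b k" "b k \<le> 1" using b(1) True unfolding is_config_def by auto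
    have K: "(1 - b k)*?f (b(k:=0)) + b k * ?f (b(k:=1)) - ?f b = b k*(1-b k)*gamma*?A"
      using key[OF True, of "b k" lam beta gamma C n R b] by simp
    have "b k*(1-b k)*gamma*?A \<ge> 0" using s assms(2) by (intro mult_nonneg_nonneg sum_nonneg) auto
    hence le: "?f b \<le> (1 - b k)*?f (b(k:=0)) + b k * ?f (b(k:=1))" using K by linarith
    have "(1 - b k)*?f (b(k:=0)) + b k * ?f (b(k:=1)) \<le> (1 - b k)*max (?f (b(k:=0))) (?f (b(k:=1))) + b k * max (?f (b(k:=0))) (?f (b(k:=1)))"
      using s by (intro add_mono mult_left_mono) auto
    hence "?f b \<le> max (?f (b(k:=0))) (?f (b(k:=1)))" using le by (simp add: algebra_simps)
    then obtain t where t: "t = 0 \<or> t = 1" "?f b \<le> ?f (b(k:=t))" by (cases "?f (b(k:=0)) \<le> ?f (b(k:=1))") (auto simp: max_def)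
    show ?thesis
    proof (rule exI[of _ "b(k:=t)"], intro conjI)
      show "is_config m (b(k:=t))" using b(1) t(1) unfolding is_config_def by auto
      show "\<forall>j. j < Suc k \<and> j < m \<longrightarrow> (b(k:=t)) j = 0 \<or> (b(k:=t)) j = 1"
        using b(2) t(1) by (auto simp: less_Suc_eq)
      show "?f y \<le> ?f (b(k:=t))" using b(3) t(2) by linarith
    qed
  qed
qed

theorem lemma1:
  fixes lam beta gamma :: real and m n :: nat
    and C :: "nat \<Rightarrow> real^2" and R :: "nat \<Rightarrow> real^2"
  assumes "lam > 0" and "beta > 0" and "gamma > 0"
    and "n \<ge> 1"
    and "\<And>j i. j < m \<Longrightarrow> i < n \<Longrightarrow> dist (C j) (R i) \<ge> lam"
    and "\<And>i i'. i < n \<Longrightarrow> i' < n \<Longrightarrow> i \<noteq> i' \<Longrightarrow> dist (R i) (R i') \<ge> lam / (2 * pi)"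
  shows "(\<forall>x. max_power_opt lam beta gamma m C n R x \<longrightarrow> is_binary m x) \<and>
         (\<exists>x. max_power_opt lam beta gamma m C n R x \<and> is_binary m x)"
proof
  let ?f = "TP lam beta gamma m C n R"
  show "\<forall>x. max_power_opt lam beta gamma m C n R x \<longrightarrow> is_binary m x"
  proof (intro allI impI)
    fix x assume opt: "max_power_opt lam beta gamma m C n R x"
    show "is_binary m x" unfolding is_binary_def
    proof (intro allI impI, rule ccontr)
      fix j assume j: "j < m" and nb: "\<not> (x j = 0 \<or> x j = 1)"
      have cx: "is_config m x" using opt unfolding max_power_opt_def by auto
      hence s: "0 < x j" "x j < 1" using j nb unfolding is_config_def by auto
      let ?A = "(\<Sum>i<n. (norm (efield lam beta (C j) (R i)))^2)"
      have "(norm (efield lam beta (C j) (R 0)))^2 > 0"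
      proof -
        have "dist (C j) (R 0) \<ge> lam" using assms(4) assms(5)[of j 0] j by simp
        hence "dist (C j) (R 0) > 0" using assms(1) by linarith
        then show ?thesis using efield_norm[of "C j" "R 0" beta lam] assms(2) by simp
      qed
      moreover have "(norm (efield lam beta (C j) (R 0)))^2 \<le> ?A"
        using assms(4) by (intro member_le_sum) auto
      ultimately have A: "?A > 0" by linarith
      have K: "(1 - x j)*?f (x(j:=0)) + x j * ?f (x(j:=1)) - ?f x = x j*(1-x j)*gamma*?A"
        using key[OF j, of "x j" lam beta gamma C n R x] by simp
      have pos: "x j*(1-x j)*gamma*?A > 0" using s A assms(3) by simp
      have c0: "is_config m (x(j:=0))" "is_config m (x(j:=1))" using cx unfolding is_config_def by auto
      have "?f (x(j:=0)) \<le> ?f x" "?f (x(j:=1)) \<le> ?f x"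
        using opt c0 unfolding max_power_opt_def by auto
      hence "(1 - x j)*?f (x(j:=0)) + x j * ?f (x(j:=1)) \<le> (1 - x j)*?f x + x j * ?f x"
        using s by (intro add_mono mult_left_mono) auto
      then show False using K pos by (simp add: algebra_simps)
    qed
  qed
next
  let ?f = "TP lam beta gamma m C n R"
  define S where "S = PiE {..<m} (\<lambda>_. {0::real, 1})"
  have fin: "finite S" unfolding S_def by (rule finite_PiE) simp_all
  have ne: "(\<lambda>j\<in>{..<m}. 0::real) \<in> S" unfolding S_def by (simp add: PiE_iff)
  have Sb: "is_config m b \<and> is_binary m b" if "b \<in> S" for b
  proof -
    have h: "\<forall>j<m. b j = 0 \<or> b j = 1" using that unfolding S_def PiE_iff by simp
    have "\<forall>j<m. b j \<in> {0..1}"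
    proof (intro allI impI)
      fix j assume "j < m" then have "b j = 0 \<or> b j = 1" using h by blast
      then show "b j \<in> {0..1}" by auto
    qed
    then show ?thesis using h unfolding is_config_def is_binary_def by blast
  qed
  have "Max (?f ` S) \<in> ?f ` S" using fin ne by (intro Max_in) blast+
  then obtain b where bS: "b \<in> S" and bmax: "?f b = Max (?f ` S)" by (metis imageE)
  show "\<exists>x. max_power_opt lam beta gamma m C n R x \<and> is_binary m x"
  proof (intro exI conjI)
    show "is_binary m b" using Sb bS by blast
    show "max_power_opt lam beta gamma m C n R b"
      unfolding max_power_opt_def
    proof (intro conjI allI impI)
      show "is_config m b" using Sb bS by blast
      fix y assume y: "is_config m y"
      obtain c where c: "is_config m c" "\<forall>j. j < m \<and> j < m \<longrightarrow> c j = 0 \<or> c j = 1"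
        "?f y \<le> ?f c" using round[OF y, where k=m and lam=lam and beta=beta and C=C and n=n and R=R] assms(3) by (meson less_imp_le)
      have rS: "restrict c {..<m} \<in> S" using c(2) unfolding S_def PiE_iff by simp
      have "?f c = ?f (restrict c {..<m})" by (rule TP_cong) simp
      also have "\<dots> \<le> Max (?f ` S)" using rS fin by (intro Max_ge) simp_all
      finally show "?f y \<le> ?f b" using c(3) bmax by linarith
    qed
  qed
qed

end
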